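(* Let $\mathcal{H}$ be a finite family of rooted digraphs. Let $D$ be a digraph, $k$ an integer, $W$ an $\mathcal{H}$-deletion set of $D$ with $|W|\le k+1$, $\mathcal{S}=(S_1,\dots,S_q)$ an ordered partition of $W$, and let $X$ be a solution for $(D,\mathcal{S},W,k)$. If $u\in V(D)$ lies in ${\sf F\textrm{-}Shadow}(X)$ (respectively ${\sf R\textrm{-}Shadow}(X)$), then there is a solution for $(D,\mathcal{S},W,k)$ that contains an important $\{u\}$-$W$ separator in $D$ (respectively an important $\{u\}$-$W$ separator in $D^{rev}$).
   Context: Subgraphs are not necessarily induced; strong components are maximal sets of mutually reachable vertices. A digraph is rooted if some vertex reaches all its vertices. $X$ is an $\mathcal{H}$-deletion set of $D$ if no strong component of $D-X$ contains a subgraph isomorphic to a graph in $\mathcal{H}$. A solution for $(D,\mathcal{S},W,k)$ is a set $X\subseteq V(D)$ with $|X|\le k$, $X\cap W=\emptyset$, $X$ an $\mathcal{H}$-deletion set, and $X$ intersecting every directed $S_i$-$S_j$ path for all $i<j$. For $X\subseteq V(D)\setminus W$, ${\sf F\textrm{-}Shadow}(X)$ is the set of vertices $u\notin X$ such that $D-X$ has no directed path from $u$ to $W$, and ${\sf R\textrm{-}Shadow}(X)$ is the set of $u\notin X$ such that $D-X$ has no directed path from $W$ to $u$. $D^{rev}$ is $D$ with all arcs reversed. For disjoint $A,B$, an $A$-$B$ separator is a set $C$ disjoint from $A\cup B$ with no $A$-$B$ path in $D-C$; $R_D(A,C)$ is the set of vertices reachable from $A$ in $D-C$; $C'$ covers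 $C$ if $R_D(A,C')\supseteq R_D(A,C)$. An $A$-$B$ separator $C$ is important if there is no $A$-$B$ separator $C'\neq C$ with $|C'|\le|C|$ that covers $C$. *)

theory Defs
  imports Main
begin

definition digraph :: "'a set \<Rightarrow> ('a \<times> 'a) set \<Rightarrow> bool" where
  "digraph V A \<longleftrightarrow> finite V \<and> A \<subseteq> V \<times> V \<and> (\<forall>x. (x, x) \<notin> A)"

definition reach :: "'a set \<Rightarrow> ('a \<times> 'a) set \<Rightarrow> 'a \<Rightarrow> 'a \<Rightarrow> bool" where
  "reach V A x y \<longleftrightarrow> x \<in> V \<and> y \<in> V \<and> (x, y) \<in> (A \<inter> (V \<times> V))\<^sup>*"

definition del_arcs :: "'a set \<Rightarrow> ('a \<times> 'a) set \<Rightarrow> 'a set \<Rightarrow> ('a \<times> 'a) set" where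
  "del_arcs V A X = A \<inter> ((V - X) \<times> (V - X))"

definition rooted :: "'a set \<Rightarrow> ('a \<times> 'a) set \<Rightarrow> bool" where
  "rooted V A \<longleftrightarrow> (\<exists>r\<in>V. \<forall>v\<in>V. reach V A r v)"

definition strong_component :: "'a set \<Rightarrow> ('a \<times> 'a) set \<Rightarrow> 'a set \<Rightarrow> bool" where
  "strong_component V A C \<longleftrightarrow> C \<noteq> {} \<and> C \<subseteq> V
     \<and> (\<forall>x\<in>C. \<forall>y\<in>C. reach V A x y \<and> reach V A y x)
     \<and> (\<forall>z\<in>V. (\<exists>x\<in>C. reach V A x z \<and> reach V A z x) \<longrightarrow> z \<in> C)"

definition contains_copy :: "'a set \<Rightarrow> ('a \<times> 'a) set \<Rightarrow> 'b set \<Rightarrow> ('b \<times> 'b) set \<Rightarrow> bool" where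
  "contains_copy C A VH AH \<longleftrightarrow>
     (\<exists>f. inj_on f VH \<and> f ` VH \<subseteq> C \<and> (\<forall>(a, b)\<in>AH. (f a, f b) \<in> A))"

definition H_deletion_set ::
  "('b set \<times> ('b \<times> 'b) set) set \<Rightarrow> 'a set \<Rightarrow> ('a \<times> 'a) set \<Rightarrow> 'a set \<Rightarrow> bool" where
  "H_deletion_set \<H> V A X \<longleftrightarrow> X \<subseteq> V \<and>
     (\<forall>C. strong_component (V - X) (del_arcs V A X) C \<longrightarrow>
        (\<forall>(VH, AH)\<in>\<H>. \<not> contains_copy C (del_arcs V A X) VH AH))"

text \<open>Ordered partition (S_1,...,S_q) of W, represented as a list (index i = S ! i).\<close>
definition ordered_partition :: "'a set list \<Rightarrow> 'a set \<Rightarrow> bool" where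
  "ordered_partition S W \<longleftrightarrow> (\<forall>i<length S. S ! i \<noteq> {})
     \<and> (\<forall>i<length S. \<forall>j<length S. i \<noteq> j \<longrightarrow> S ! i \<inter> S ! j = {})
     \<and> \<Union> (set S) = W"

definition is_solution ::
  "('b set \<times> ('b \<times> 'b) set) set \<Rightarrow> 'a set \<Rightarrow> ('a \<times> 'a) set \<Rightarrow> 'a set list \<Rightarrow> 'a set
    \<Rightarrow> int \<Rightarrow> 'a set \<Rightarrow> bool" where
  "is_solution \<H> V A S W k X \<longleftrightarrow> X \<subseteq> V \<and> int (card X) \<le> k \<and> X \<inter> W = {}
     \<and> H_deletion_set \<H> V A X
     \<and> (\<forall>i j. i < j \<and> j < length S \<longrightarrow>
          (\<forall>s\<in>S ! i. \<forall>t\<in>S ! j. \<not> reach (V - X) (del_arcs V A X) s t))"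

definition F_shadow :: "'a set \<Rightarrow> ('a \<times> 'a) set \<Rightarrow> 'a set \<Rightarrow> 'a set \<Rightarrow> 'a set" where
  "F_shadow V A W X = {u \<in> V - X. \<not> (\<exists>w\<in>W. reach (V - X) (del_arcs V A X) u w)}"

definition R_shadow :: "'a set \<Rightarrow> ('a \<times> 'a) set \<Rightarrow> 'a set \<Rightarrow> 'a set \<Rightarrow> 'a set" where
  "R_shadow V A W X = {u \<in> V - X. \<not> (\<exists>w\<in>W. reach (V - X) (del_arcs V A X) w u)}"

definition separator :: "'a set \<Rightarrow> ('a \<times> 'a) set \<Rightarrow> 'a set \<Rightarrow> 'a set \<Rightarrow> 'a set \<Rightarrow> bool" where
  "separator V A Src Tgt C \<longleftrightarrow> C \<subseteq> V \<and> C \<inter> (Src \<union> Tgt) = {}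
     \<and> (\<forall>a\<in>Src. \<forall>b\<in>Tgt. \<not> reach (V - C) (del_arcs V A C) a b)"

definition reach_set :: "'a set \<Rightarrow> ('a \<times> 'a) set \<Rightarrow> 'a set \<Rightarrow> 'a set \<Rightarrow> 'a set" where
  "reach_set V A Src C = {v. \<exists>a\<in>Src. reach (V - C) (del_arcs V A C) a v}"

definition important_separator :: "'a set \<Rightarrow> ('a \<times> 'a) set \<Rightarrow> 'a set \<Rightarrow> 'a set \<Rightarrow> 'a set \<Rightarrow> bool" where
  "important_separator V A Src Tgt C \<longleftrightarrow> separator V A Src Tgt C \<and>
     \<not> (\<exists>C'. separator V A Src Tgt C' \<and> C' \<noteq> C \<and> card C' \<le> card C
            \<and> reach_set V A Src C \<subseteq> reach_set V A Src C')"

end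

theory Submission
  imports Defs
begin

lemma reach_del:
  "reach (V - Y) (del_arcs V A Y) x y \<longleftrightarrow> x \<in> V - Y \<and> y \<in> V - Y \<and> (x, y) \<in> (del_arcs V A Y)\<^sup>*"
proof -
  have "del_arcs V A Y \<inter> ((V - Y) \<times> (V - Y)) = del_arcs V A Y" by (auto simp: del_arcs_def)
  then show ?thesis by (simp add: reach_def)
qed

lemma del_arcs_mono: "Y \<subseteq> Z \<Longrightarrow> del_arcs V A Z \<subseteq> del_arcs V A Y"
  by (auto simp: del_arcs_def)

lemma rtrancl_del_in0:
  "(x,y) \<in> (del_arcs V A Y)\<^sup>* \<Longrightarrow> x \<noteq> y \<longrightarrow> x \<in> V - Y \<and> y \<in> V - Y"
  by (induction rule: rtrancl_induct) (auto simp: del_arcs_def)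

lemma rtrancl_del_in:
  "(x,y) \<in> (del_arcs V A Y)\<^sup>* \<Longrightarrow> x \<in> V - Y \<Longrightarrow> y \<in> V - Y"
  using rtrancl_del_in0 by metis

lemma scc_path:
  assumes "(a, b) \<in> E\<^sup>*" "(b, a) \<in> E\<^sup>*"
    and "{y. (a,y) \<in> E\<^sup>* \<and> (y,a) \<in> E\<^sup>*} \<subseteq> M"
  shows "(a, b) \<in> (E \<inter> M \<times> M)\<^sup>*"
  using assms
proof (induction rule: rtrancl_induct)
  case base then show ?case by simp
next
  case (step y z)
  have ya: "(y, a) \<in> E\<^sup>*" using step(2,4) by (rule converse_rtrancl_into_rtrancl)
  have "(a,y) \<in> (E \<inter> M \<times> M)\<^sup>*" using step(3)[OF ya step(5)] .
  moreover have "y \<in> M" using step(1) ya step(5) by blast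
  moreover have "(a,z) \<in> E\<^sup>*" using step(1,2) by (rule rtrancl_into_rtrancl)
  then have "z \<in> M" using step(4,5) by blast
  ultimately show ?case using step(2) by (meson IntI SigmaI rtrancl.rtrancl_into_rtrancl)
qed

lemma comp_transfer:
  assumes K: "strong_component (V - X') (del_arcs V A X') K"
    and KY: "K \<inter> Y = {}" and Y: "H_deletion_set \<H> V A Y"
    and H: "(VH, AH) \<in> \<H>" "AH \<subseteq> VH \<times> VH"
    and cp: "contains_copy K (del_arcs V A X') VH AH"
  shows False
proof -
  let ?E = "del_arcs V A X'"
  let ?F = "del_arcs V A Y"
  obtain x where x: "x \<in> K" using K by (auto simp: strong_component_def)
  define M where "M = {y. (x,y) \<in> ?E\<^sup>* \<and> (y,x) \<in> ?E\<^sup>*}"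
  have KV: "K \<subseteq> V - X'" using K by (auto simp: strong_component_def)
  have MK: "M \<subseteq> K"
  proof
    fix y assume "y \<in> M"
    then have xy: "(x,y) \<in> ?E\<^sup>*" "(y,x) \<in> ?E\<^sup>*" by (auto simp: M_def)
    have "y \<in> V - X'" using rtrancl_del_in[OF xy(1)] x KV by blast
    then have "reach (V - X') ?E x y \<and> reach (V - X') ?E y x" using xy x KV by (auto simp add: reach_del)
    moreover have "\<forall>z\<in>V - X'. (\<exists>x\<in>K. reach (V - X') ?E x z \<and> reach (V - X') ?E z x) \<longrightarrow> z \<in> K"
      using K unfolding strong_component_def by blast
    ultimately show "y \<in> K" using x \<open>y \<in> V - X'\<close> by blast
  qed
  have EM: "?E \<inter> M \<times> M \<subseteq> ?F" using MK KY KV by (auto simp: del_arcs_def)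
  have KK: "(x,z) \<in> ?F\<^sup>* \<and> (z,x) \<in> ?F\<^sup>*" if z: "z \<in> K" for z
  proof -
    have "reach (V - X') ?E x z \<and> reach (V - X') ?E z x"
      using K x z unfolding strong_component_def by blast
    then have xz: "(x,z) \<in> ?E\<^sup>*" "(z,x) \<in> ?E\<^sup>*" by (simp_all add: reach_del)
    have "(x,z) \<in> (?E \<inter> M \<times> M)\<^sup>*" using scc_path[OF xz] M_def by blast
    moreover have "(z,x) \<in> (?E \<inter> M \<times> M)\<^sup>*"
    proof (rule scc_path[OF xz(2) xz(1)])
      show "{y. (z, y) \<in> ?E\<^sup>* \<and> (y, z) \<in> ?E\<^sup>*} \<subseteq> M"
        unfolding M_def using xz by (auto intro: rtrancl_trans)
    qed
    ultimately show ?thesis using rtrancl_mono[OF EM] by blast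
  qed
  define K' where "K' = {z \<in> V - Y. (x,z) \<in> ?F\<^sup>* \<and> (z,x) \<in> ?F\<^sup>*}"
  have KK': "K \<subseteq> K'" using KK KV KY unfolding K'_def by blast
  have "strong_component (V - Y) ?F K'"
    unfolding strong_component_def reach_del
  proof (intro conjI)
    show "K' \<noteq> {}" using KK' x by blast
    show "K' \<subseteq> V - Y" unfolding K'_def by blast
    show "\<forall>xa\<in>K'. \<forall>y\<in>K'. (xa \<in> V - Y \<and> y \<in> V - Y \<and> (xa, y) \<in> ?F\<^sup>*) \<and> y \<in> V - Y \<and> xa \<in> V - Y \<and> (y, xa) \<in> ?F\<^sup>*"
      unfolding K'_def by (auto intro: rtrancl_trans)
    show "\<forall>z\<in>V - Y. (\<exists>xa\<in>K'. (xa \<in> V - Y \<and> z \<in> V - Y \<and> (xa, z) \<in> ?F\<^sup>*) \<and> z \<in> V - Y \<and> xa \<in> V - Y \<and> (z, xa) \<in> ?F\<^sup>*) \<longrightarrow> z \<in> K'"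
      unfolding K'_def by (auto intro: rtrancl_trans)
  qed
  moreover have "contains_copy K' ?F VH AH"
  proof -
    from cp obtain f where f: "inj_on f VH" "f ` VH \<subseteq> K" "\<forall>(a, b)\<in>AH. (f a, f b) \<in> ?E"
      unfolding contains_copy_def by blast
    have "\<forall>(a, b)\<in>AH. (f a, f b) \<in> ?F"
    proof (intro ballI, clarify)
      fix a b assume ab: "(a,b) \<in> AH"
      then have "f a \<in> K" "f b \<in> K" using H(2) f(2) by auto
      moreover have "(f a, f b) \<in> ?E" using f(3) ab by blast
      ultimately show "(f a, f b) \<in> ?F" using KY by (auto simp: del_arcs_def)
    qed
    then show ?thesis unfolding contains_copy_def using f KK' by blast
  qed
  ultimately show False using Y H(1) unfolding H_deletion_set_def by fast
qed

lemma F_case: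
  fixes \<H> :: "('b set \<times> ('b \<times> 'b) set) set"
  assumes HD: "\<forall>(VH, AH)\<in>\<H>. AH \<subseteq> VH \<times> VH"
    and D: "digraph V A"
    and HW: "H_deletion_set \<H> V A W"
    and SW: "\<forall>i<length S. S ! i \<subseteq> W"
    and sol: "is_solution \<H> V A S W k X"
    and u: "u \<in> F_shadow V A W X"
  shows "\<exists>X'. is_solution \<H> V A S W k X' \<and> (\<exists>C. C \<subseteq> X' \<and> important_separator V A {u} W C)"
proof -
  let ?E = "del_arcs V A"
  define RS where "RS C = {v. reach (V - C) (?E C) u v}" for C
  have RS_eq: "reach_set V A {u} C = RS C" for C by (simp add: reach_set_def RS_def)
  have sep_iff: "separator V A {u} W C \<longleftrightarrow> C \<subseteq> V \<and> u \<notin> C \<and> C \<inter> W = {} \<and> RS C \<inter> W = {}" for C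
    unfolding separator_def RS_def by blast
  have fV: "finite V" and AV: "A \<subseteq> V \<times> V" using D by (auto simp: digraph_def)
  have XV: "X \<subseteq> V" and XW: "X \<inter> W = {}" and cardX: "int (card X) \<le> k"
    and XH: "H_deletion_set \<H> V A X"
    and XS: "\<forall>i j. i < j \<and> j < length S \<longrightarrow> (\<forall>s\<in>S ! i. \<forall>t\<in>S ! j. \<not> reach (V - X) (?E X) s t)"
    using sol by (auto simp: is_solution_def)
  have WV: "W \<subseteq> V" using HW by (simp add: H_deletion_set_def)
  have uX: "u \<in> V - X" and uW0: "RS X \<inter> W = {}" using u by (auto simp: F_shadow_def RS_def)
  have RSV: "RS C \<subseteq> V - C" for C by (auto simp: RS_def reach_del)
  have RS_u: "u \<in> V - C \<Longrightarrow> u \<in> RS C" for C by (simp add: RS_def reach_del)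
  have RS_closed: "y \<in> RS C" if "v \<in> RS C" "(v, y) \<in> ?E C" for v y C
  proof -
    have "(u, y) \<in> (?E C)\<^sup>*" using that rtrancl_into_rtrancl[of u v "?E C" y] by (simp add: RS_def reach_del)
    moreover have "y \<in> V - C" using that(2) by (auto simp: del_arcs_def)
    ultimately show ?thesis using that(1) by (simp add: RS_def reach_del)
  qed
  have RS_path: "b \<in> RS C" if "(a, b) \<in> (?E C)\<^sup>*" "a \<in> RS C" for a b C
    using that by (induction rule: rtrancl_induct) (auto intro: RS_closed)
  have RS_mono: "RS C' \<subseteq> RS C" if "C \<subseteq> C'" for C C'
  proof
    fix v assume "v \<in> RS C'"
    then have "(u, v) \<in> (?E C')\<^sup>*" "u \<in> V - C'" "v \<in> V - C'" by (auto simp: RS_def reach_del)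
    moreover have "(?E C')\<^sup>* \<subseteq> (?E C)\<^sup>*" using del_arcs_mono[OF that] by (rule rtrancl_mono)
    ultimately show "v \<in> RS C" using that by (auto simp: RS_def reach_del)
  qed
  define C0 where "C0 = {y \<in> X. \<exists>v \<in> RS X. (v, y) \<in> A}"
  have C0X: "C0 \<subseteq> X" by (auto simp: C0_def)
  have RS_C0_sub: "RS C0 \<subseteq> RS X"
  proof
    fix v assume "v \<in> RS C0"
    then have uv: "(u, v) \<in> (?E C0)\<^sup>*" by (simp add: RS_def reach_del)
    show "v \<in> RS X" using uv
    proof (induction rule: rtrancl_induct)
      case base then show ?case using RS_u uX by blast
    next
      case (step y z)
      then have "z \<in> V - C0" "(y, z) \<in> A" by (auto simp: del_arcs_def)
      then have "z \<notin> X" using step(3) by (auto simp: C0_def)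
      then have "(y, z) \<in> ?E X" using step(3) RSV \<open>z \<in> V - C0\<close> \<open>(y, z) \<in> A\<close> by (auto simp: del_arcs_def)
      then show ?case using RS_closed step(3) by blast
    qed
  qed
  have RS_C0: "RS C0 = RS X" using RS_C0_sub RS_mono[OF C0X] by blast
  have sep0: "separator V A {u} W C0"
    unfolding sep_iff using C0X XV uX XW RS_C0 uW0 by blast
  define P where "P C' \<longleftrightarrow> separator V A {u} W C' \<and> card C' \<le> card C0 \<and> RS C0 \<subseteq> RS C'" for C'
  have P0: "P C0" using sep0 by (simp add: P_def)
  have Pbound: "\<forall>C'. P C' \<longrightarrow> card (RS C') < Suc (card V)"
  proof (intro allI impI)
    fix C' show "card (RS C') < Suc (card V)"
    proof -
      have "RS C' \<subseteq> V" using RSV by blast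
      then show ?thesis using card_mono[OF fV, of "RS C'"] by simp
    qed
  qed
  obtain C1 where C1: "P C1" "\<forall>C'. P C' \<longrightarrow> card (RS C') \<le> card (RS C1)"
    using Lattices_Big.ex_has_greatest_nat[of P C0 "\<lambda>C. card (RS C)" "Suc (card V)", OF P0 Pbound] by blast
  define Q where "Q C' \<longleftrightarrow> P C' \<and> card (RS C') = card (RS C1)" for C'
  obtain C where C: "Q C" "\<forall>C'. Q C' \<longrightarrow> card C \<le> card C'"
    using ex_has_least_nat[of Q C1 card] C1(1) by (auto simp: Q_def)
  have PC: "P C" and CRS: "card (RS C) = card (RS C1)" using C(1) by (auto simp: Q_def)
  have sepC: "separator V A {u} W C" and cardC: "card C \<le> card C0" and C0C: "RS C0 \<subseteq> RS C"
    using PC by (auto simp: P_def)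
  have CV: "C \<subseteq> V" and uC: "u \<notin> C" and CW: "C \<inter> W = {}" and RSCW: "RS C \<inter> W = {}"
    using sepC by (auto simp: sep_iff)
  have fC: "finite C" using CV fV finite_subset by blast
  have Cnb: "\<exists>v \<in> RS C. (v, x) \<in> A" if xC: "x \<in> C" for x
  proof (rule ccontr)
    assume nb: "\<not> (\<exists>v \<in> RS C. (v, x) \<in> A)"
    define C' where "C' = C - {x}"
    have "RS C' \<subseteq> RS C"
    proof
      fix v assume "v \<in> RS C'"
      then have uv: "(u, v) \<in> (?E C')\<^sup>*" by (simp add: RS_def reach_del)
      show "v \<in> RS C" using uv
      proof (induction rule: rtrancl_induct)
        case base then show ?case using RS_u uC CV uX by blast
      next
        case (step y z)
        then have "z \<in> V - C'" "(y, z) \<in> A" by (auto simp: del_arcs_def)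
        then have "z \<noteq> x" using step(3) nb by blast
        then have "(y, z) \<in> ?E C" using step(3) RSV \<open>z \<in> V - C'\<close> \<open>(y, z) \<in> A\<close>
          by (auto simp: del_arcs_def C'_def)
        then show ?case using RS_closed step(3) by blast
      qed
    qed
    moreover have "RS C \<subseteq> RS C'" using RS_mono[of C' C] by (auto simp: C'_def)
    ultimately have eq: "RS C' = RS C" by blast
    have "separator V A {u} W C'" using sepC eq unfolding sep_iff C'_def by blast
    moreover have "card C' < card C" unfolding C'_def using card_Diff1_less[OF fC xC] .
    ultimately have "Q C'" using cardC C0C eq CRS by (auto simp: Q_def P_def)
    then have "card C \<le> card C'" using C(2) by blast
    then show False using \<open>card C' < card C\<close> by simp
  qed
  have impC: "important_separator V A {u} W C"
    unfolding important_separator_def RS_eq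
  proof (intro conjI notI sepC)
    assume "\<exists>C''. separator V A {u} W C'' \<and> C'' \<noteq> C \<and> card C'' \<le> card C \<and> RS C \<subseteq> RS C''"
    then obtain C'' where C'': "separator V A {u} W C''" "C'' \<noteq> C" "card C'' \<le> card C" "RS C \<subseteq> RS C''"
      by blast
    have "P C''" using C'' cardC C0C by (auto simp: P_def)
    then have "card (RS C'') \<le> card (RS C)" using C1(2) CRS by auto
    moreover have "finite (RS C'')" using RSV fV finite_subset by (metis finite_Diff)
    ultimately have eq: "RS C = RS C''" using C''(4) card_subset_eq by (metis card_mono le_antisym)
    have C''V: "C'' \<subseteq> V" using C''(1) by (simp add: sep_iff)
    have "C \<subseteq> C''"
    proof
      fix x assume xC: "x \<in> C"
      obtain v where v: "v \<in> RS C" "(v, x) \<in> A" using Cnb[OF xC] by blast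
      show "x \<in> C''"
      proof (rule ccontr)
        assume "x \<notin> C''"
        moreover have "v \<in> V - C''" using v(1) eq RSV by blast
        ultimately have "(v, x) \<in> ?E C''" using v(2) AV by (auto simp: del_arcs_def)
        then have "x \<in> RS C''" using RS_closed v(1) eq by blast
        then show False using eq RSV xC by blast
      qed
    qed
    moreover have "finite C''" using C''V fV finite_subset by blast
    ultimately have "C = C''" using C''(3) card_subset_eq card_mono le_antisym by metis
    then show False using C''(2) by simp
  qed
  define X' where "X' = (X - C0) \<union> C"
  define R' where "R' = RS C"
  have X'V: "X' \<subseteq> V" using XV CV by (auto simp: X'_def)
  have fX: "finite X" using XV fV finite_subset by blast
  have "card X' \<le> card (X - C0) + card C" unfolding X'_def by (rule card_Un_le)
  also have "card (X - C0) = card X - card C0" using C0X fX by (meson card_Diff_subset finite_subset)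
  finally have "card X' \<le> card X"
    using cardC card_mono[OF fX C0X] by linarith
  then have cardX': "int (card X') \<le> k" using cardX by linarith
  have X'W: "X' \<inter> W = {}" using XW CW by (auto simp: X'_def)
  have C0sub: "C0 \<subseteq> C \<union> R'"
  proof
    fix y assume "y \<in> C0"
    then obtain v where v: "v \<in> RS X" "(v, y) \<in> A" by (auto simp: C0_def)
    then have vC: "v \<in> RS C" using RS_C0 C0C by blast
    show "y \<in> C \<union> R'"
    proof (cases "y \<in> C")
      case False
      then have "(v, y) \<in> ?E C" using vC RSV v(2) AV by (auto simp: del_arcs_def)
      then show ?thesis using RS_closed vC by (auto simp: R'_def)
    qed simp
  qed
  have XX': "X \<subseteq> X' \<union> R'" using C0sub by (auto simp: X'_def)
  have CX': "C \<subseteq> X'" by (auto simp: X'_def)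
  have EX'C: "?E X' \<subseteq> ?E C" using del_arcs_mono[OF CX'] .
  have fwd: "b \<in> R'" if "(a, b) \<in> (?E X')\<^sup>*" "a \<in> R'" for a b
    using RS_path[of a b C] rtrancl_mono[OF EX'C] that by (auto simp: R'_def)
  have avoid: "(a, b) \<in> (?E X)\<^sup>*" if "(a, b) \<in> (?E X')\<^sup>*" "b \<notin> R'" for a b
    using that
  proof (induction rule: converse_rtrancl_induct)
    case base then show ?case by simp
  next
    case (step a y)
    have "y \<notin> R'" using fwd step(2,4) by blast
    moreover have "a \<notin> R'"
    proof
      assume "a \<in> R'"
      then have "y \<in> R'" using fwd step(1) by blast
      then show False using \<open>y \<notin> R'\<close> by blast
    qed
    ultimately have "(a, y) \<in> ?E X" using step(1) XX' by (auto simp: del_arcs_def)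
    then show ?case using step(3,4) by (meson converse_rtrancl_into_rtrancl)
  qed
  have R'W: "R' \<inter> W = {}" using RSCW by (simp add: R'_def)
  have X'H: "H_deletion_set \<H> V A X'"
    unfolding H_deletion_set_def
  proof (intro conjI X'V allI impI ballI, clarify)
    fix K VH AH
    assume K: "strong_component (V - X') (?E X') K" and H: "(VH, AH) \<in> \<H>"
      and cp: "contains_copy K (?E X') VH AH"
    have AHV: "AH \<subseteq> VH \<times> VH" using HD H by blast
    obtain x where x: "x \<in> K" using K by (auto simp: strong_component_def)
    have KV: "K \<subseteq> V - X'" using K by (auto simp: strong_component_def)
    have Kp: "(a, b) \<in> (?E X')\<^sup>*" if "a \<in> K" "b \<in> K" for a b
    proof -
      have "reach (V - X') (?E X') a b" using K that unfolding strong_component_def by blast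
      then show ?thesis by (simp add: reach_del)
    qed
    show False
    proof (cases "x \<in> R'")
      case True
      then have "K \<subseteq> R'" using Kp x fwd by blast
      then have "K \<inter> W = {}" using R'W by blast
      then show False using comp_transfer[OF K _ HW H AHV cp] by blast
    next
      case False
      then have "K \<inter> R' = {}" using Kp x fwd by blast
      then have "K \<inter> X = {}" using KV XX' by blast
      then show False using comp_transfer[OF K _ XH H AHV cp] by blast
    qed
  qed
  have X'S: "\<forall>i j. i < j \<and> j < length S \<longrightarrow> (\<forall>s\<in>S ! i. \<forall>t\<in>S ! j. \<not> reach (V - X') (?E X') s t)"
  proof (intro allI impI ballI notI)
    fix i j s t
    assume ij: "i < j \<and> j < length S" and s: "s \<in> S ! i" and t: "t \<in> S ! j"
      and r: "reach (V - X') (?E X') s t"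
    have sW: "s \<in> W" and tW: "t \<in> W" using SW ij s t less_trans by blast+
    have "(s, t) \<in> (?E X')\<^sup>*" using r by (simp add: reach_del)
    moreover have "t \<notin> R'" using tW R'W by blast
    ultimately have "(s, t) \<in> (?E X)\<^sup>*" using avoid by blast
    then have "reach (V - X) (?E X) s t" using sW tW WV XW by (auto simp: reach_del)
    then show False using XS ij s t by blast
  qed
  have "is_solution \<H> V A S W k X'"
    unfolding is_solution_def using X'V cardX' X'W X'H X'S by blast
  then show ?thesis using impC CX' by blast
qed


lemma rev_order:
  "(\<forall>i j. i < j \<and> j < length S \<longrightarrow> (\<forall>s\<in>rev S ! i. \<forall>t\<in>rev S ! j. \<not> Rch t s))
   \<longleftrightarrow> (\<forall>i j. i < j \<and> j < length S \<longrightarrow> (\<forall>s\<in>S ! i. \<forall>t\<in>S ! j. \<not> Rch s t))"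
  (is "?L \<longleftrightarrow> ?R")
proof
  assume L: ?L
  show ?R
  proof (intro allI impI ballI)
    fix i j s t assume ij: "i < j \<and> j < length S" and s: "s \<in> S ! i" and t: "t \<in> S ! j"
    let ?i = "length S - Suc j" and ?j = "length S - Suc i"
    have "?i < ?j \<and> ?j < length S" using ij by auto
    moreover have "rev S ! ?i = S ! j" using ij by (auto simp: rev_nth Suc_diff_Suc)
    moreover have "rev S ! ?j = S ! i" using ij by (auto simp: rev_nth Suc_diff_Suc)
    ultimately show "\<not> Rch s t" using L s t by metis
  qed
next
  assume R: ?R
  show ?L
  proof (intro allI impI ballI)
    fix i j s t assume ij: "i < j \<and> j < length S" and s: "s \<in> rev S ! i" and t: "t \<in> rev S ! j"
    let ?i = "length S - Suc j" and ?j = "length S - Suc i"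
    have "?i < ?j \<and> ?j < length S" using ij by auto
    moreover have "rev S ! j = S ! ?i" using ij by (auto simp: rev_nth Suc_diff_Suc)
    moreover have "rev S ! i = S ! ?j" using ij by (auto simp: rev_nth Suc_diff_Suc)
    ultimately show "\<not> Rch t s" using R s t by metis
  qed
qed

definition rvH :: "('b set \<times> ('b \<times> 'b) set) set \<Rightarrow> ('b set \<times> ('b \<times> 'b) set) set" where
  "rvH H = (\<lambda>(VH, AH). (VH, converse AH)) ` H"

lemma del_conv: "del_arcs V (converse A) X = converse (del_arcs V A X)"
  by (auto simp: del_arcs_def)

lemma reach_conv: "reach V' (converse A) x y = reach V' A y x"
proof -
  have "converse A \<inter> V' \<times> V' = converse (A \<inter> V' \<times> V')" by auto
  then show ?thesis by (auto simp: reach_def rtrancl_converse)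
qed

lemma sc_conv: "strong_component V' (converse A) K = strong_component V' A K"
  unfolding strong_component_def reach_conv by blast

lemma ball_conv: "(\<forall>(a, b)\<in>converse R. P a b) \<longleftrightarrow> (\<forall>(b, a)\<in>R. P a b)"
  by auto

lemma cc_conv: "contains_copy K (converse B) VH (converse AH) = contains_copy K B VH AH"
  unfolding contains_copy_def ball_conv by simp

lemma rvH_ball: "(\<forall>(VH, AH)\<in>rvH H. P VH AH) \<longleftrightarrow> (\<forall>(VH, AH)\<in>H. P VH (converse AH))"
  by (auto simp: rvH_def)

lemma H_conv: "H_deletion_set (rvH H) V (converse A) X = H_deletion_set H V A X"
proof -
  have "(\<forall>(VH, AH)\<in>rvH H. \<not> contains_copy C (converse (del_arcs V A X)) VH AH)
     \<longleftrightarrow> (\<forall>(VH, AH)\<in>H. \<not> contains_copy C (del_arcs V A X) VH AH)" for C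
    unfolding rvH_ball cc_conv ..
  then show ?thesis unfolding H_deletion_set_def del_conv sc_conv by simp
qed

lemma sol_conv: "is_solution (rvH H) V (converse A) (rev S) W k X = is_solution H V A S W k X"
  unfolding is_solution_def H_conv del_conv reach_conv length_rev
  by (simp only: rev_order[of S "reach (V - X) (del_arcs V A X)"])

lemma Rsh: "R_shadow V A W X = F_shadow V (converse A) W X"
  unfolding R_shadow_def F_shadow_def del_conv reach_conv ..


theorem lemma12:
  fixes \<H> :: "('b set \<times> ('b \<times> 'b) set) set"
    and V :: "'a set" and A :: "('a \<times> 'a) set"
    and k :: int and W X :: "'a set" and S :: "'a set list" and u :: 'a
  assumes "finite \<H>"
    and "\<forall>(VH, AH)\<in>\<H>. digraph VH AH \<and> rooted VH AH"
    and "digraph V A"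
    and "H_deletion_set \<H> V A W"
    and "int (card W) \<le> k + 1"
    and "ordered_partition S W"
    and "is_solution \<H> V A S W k X"
    and "u \<in> V"
  shows "(u \<in> F_shadow V A W X \<longrightarrow>
            (\<exists>X'. is_solution \<H> V A S W k X' \<and>
                  (\<exists>C. C \<subseteq> X' \<and> important_separator V A {u} W C)))
       \<and> (u \<in> R_shadow V A W X \<longrightarrow>
            (\<exists>X'. is_solution \<H> V A S W k X' \<and>
                  (\<exists>C. C \<subseteq> X' \<and> important_separator V (converse A) {u} W C)))"
proof (intro conjI impI)
  have UW: "\<Union> (set S) = W" using assms(6) by (simp add: ordered_partition_def)
  have HD: "\<forall>(VH, AH)\<in>\<H>. AH \<subseteq> VH \<times> VH" 
  proof -
    have "digraph VH AH" if "(VH, AH) \<in> \<H>" for VH AH using assms(2) that by blast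
    then have "AH \<subseteq> VH \<times> VH" if "(VH, AH) \<in> \<H>" for VH AH using that by (simp add: digraph_def)
    then show ?thesis by blast
  qed
  have SW: "\<forall>i<length S. S ! i \<subseteq> W"
  proof (intro allI impI)
    fix i assume "i < length S"
    then have "S ! i \<in> set S" by (rule nth_mem)
    then show "S ! i \<subseteq> W" using UW by blast
  qed
  {
    assume uF0: "u \<in> F_shadow V A W X"
    show "\<exists>X'. is_solution \<H> V A S W k X' \<and> (\<exists>C. C \<subseteq> X' \<and> important_separator V A {u} W C)"
      by (rule F_case[OF HD assms(3) assms(4) SW assms(7) uF0])
  }
  assume "u \<in> R_shadow V A W X"
  then have uF: "u \<in> F_shadow V (converse A) W X" by (simp add: Rsh)
  have HD': "\<forall>(VH, AH)\<in>rvH \<H>. AH \<subseteq> VH \<times> VH" using HD by (auto simp: rvH_def)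
  have D': "digraph V (converse A)" using assms(3) by (auto simp: digraph_def)
  have HW': "H_deletion_set (rvH \<H>) V (converse A) W" using assms(4) by (simp add: H_conv)
  have SW': "\<forall>i<length (rev S). rev S ! i \<subseteq> W"
  proof (intro allI impI)
    fix i assume "i < length (rev S)"
    then have "rev S ! i \<in> set (rev S)" by (rule nth_mem)
    then have "rev S ! i \<in> set S" by simp
    then show "rev S ! i \<subseteq> W" using UW by blast
  qed
  have sol': "is_solution (rvH \<H>) V (converse A) (rev S) W k X" using assms(7) by (simp add: sol_conv)
  show "\<exists>X'. is_solution \<H> V A S W k X' \<and> (\<exists>C. C \<subseteq> X' \<and> important_separator V (converse A) {u} W C)"
    using F_case[OF HD' D' HW' SW' sol' uF] unfolding sol_conv .
qed

end
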